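(* Let $k\ge 2$ and $\Delta\ge 2$ be integers, let $f(z)=\frac{(1-z^{k-1})^{\Delta-1}}{1+(1-z^{k-1})^{\Delta-1}}$ on $[0,1]$, and let $x$ be the unique point of $[0,1]$ with $f(x)=x$. If $|f'(x)|<1$, the independent set model has uniqueness on $\mathbb{T}_{k,\Delta}$. If $|f'(x)|>1$, the independent set model has non-uniqueness on $\mathbb{T}_{k,\Delta}$.
   Context: $\mathbb{T}_{k,\Delta}$ is the infinite $(\Delta-1)$-ary $k$-uniform hypertree with root $\rho$: recursively, each vertex has $\Delta-1$ descending hyperedges, each consisting of that vertex together with $k-1$ new vertices. For $n\ge 0$, $\mathbb{T}(n)$ is the sub-hypergraph induced by vertices at distance at most $n$ from $\rho$, and $L_n$ is the set of vertices at distance exactly $n$ from $\rho$. An independent set (vertex subset containing no hyperedge) is identified with $\sigma:V(\mathbb{T}(n))\to\{0,1\}$, $\sigma(v)=1$ iff $v$ is in the set; $\mu_n$ is the uniform distribution on independent sets of $\mathbb{T}(n)$. The model has uniqueness on $\mathbb{T}_{k,\Delta}$ iff $\limsup_{n\to\infty}\max_{\eta,\eta':L_n\to\{0,1\}}|\mu_n(\sigma_\rho=1\mid\sigma_{L_n}=\eta)-\mu_n(\sigma_\rho=1\mid\sigma_{L_n}=\eta')|=0$, and non-uniqueness otherwise. *)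

theory Defs
  imports "HOL-Analysis.Analysis"
begin

text \<open>Vertices of T(n) for the (Delta-1)-ary k-uniform hypertree: a vertex is the
list of choices (j, i) from the root, j < Delta-1 the descending hyperedge,
i < k-1 the position among the new vertices of that hyperedge.\<close>

definition hverts :: "nat \<Rightarrow> nat \<Rightarrow> nat \<Rightarrow> (nat \<times> nat) list set" where
  "hverts k D n = {v. length v \<le> n \<and> (\<forall>p\<in>set v. fst p < D - 1 \<and> snd p < k - 1)}"

definition hedges :: "nat \<Rightarrow> nat \<Rightarrow> nat \<Rightarrow> (nat \<times> nat) list set set" where
  "hedges k D n = {insert v {v @ [(j, i)] | i. i < k - 1} | v j.
      v \<in> hverts k D n \<and> length v < n \<and> j < D - 1}"

definition level :: "nat \<Rightarrow> nat \<Rightarrow> nat \<Rightarrow> (nat \<times> nat) list set" where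
  "level k D n = {v \<in> hverts k D n. length v = n}"

text \<open>Independent sets of T(n) (identified with sigma via sigma(v)=1 iff v in S).\<close>
definition indep_sets :: "nat \<Rightarrow> nat \<Rightarrow> nat \<Rightarrow> (nat \<times> nat) list set set" where
  "indep_sets k D n = {S. S \<subseteq> hverts k D n \<and> (\<forall>e\<in>hedges k D n. \<not> e \<subseteq> S)}"

text \<open>mu_n(sigma_root = 1 | sigma_{L_n} = eta) for the uniform distribution mu_n,
with the boundary condition eta given as the subset of L_n where it equals 1.\<close>
definition cond_root_prob :: "nat \<Rightarrow> nat \<Rightarrow> nat \<Rightarrow> (nat \<times> nat) list set \<Rightarrow> real" where
  "cond_root_prob k D n \<eta> =
     real (card {S \<in> indep_sets k D n. [] \<in> S \<and> S \<inter> level k D n = \<eta>})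
     / real (card {S \<in> indep_sets k D n. S \<inter> level k D n = \<eta>})"

definition boundary_gap :: "nat \<Rightarrow> nat \<Rightarrow> nat \<Rightarrow> real" where
  "boundary_gap k D n = Max {\<bar>cond_root_prob k D n \<eta> - cond_root_prob k D n \<eta>'\<bar> | \<eta> \<eta>'.
      \<eta> \<subseteq> level k D n \<and> \<eta>' \<subseteq> level k D n}"

definition has_uniqueness :: "nat \<Rightarrow> nat \<Rightarrow> bool" where
  "has_uniqueness k D \<longleftrightarrow> limsup (\<lambda>n. ereal (boundary_gap k D n)) = 0"

end

theory Submission
  imports Defs
begin


definition sub :: "nat \<times> nat \<Rightarrow> (nat \<times> nat) list set \<Rightarrow> (nat \<times> nat) list set" where
  "sub c S = {w. c # w \<in> S}"

definition build :: "bool \<Rightarrow> (nat \<Rightarrow> nat \<Rightarrow> (nat \<times> nat) list set) \<Rightarrow> nat \<Rightarrow> nat \<Rightarrow> (nat \<times> nat) list set" where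
  "build b G d m = (if b then {[]} else {}) \<union> (\<Union>j<d. \<Union>i<m. (#) (j, i) ` G j i)"

lemma mem_build_Nil[simp]: "([] \<in> build b G d m) = b"
  by (auto simp: build_def)

lemma mem_build_Cons[simp]: "(c # u \<in> build b G d m) = (fst c < d \<and> snd c < m \<and> u \<in> G (fst c) (snd c))"
  by (cases c) (auto simp: build_def)

lemma hverts_Nil[simp]: "[] \<in> hverts k D n"
  by (simp add: hverts_def)

lemma hverts_Cons_Suc[simp]: "(c # w \<in> hverts k D (Suc n)) = (fst c < D - 1 \<and> snd c < k - 1 \<and> w \<in> hverts k D n)"
  by (auto simp: hverts_def)

lemma hverts_0: "hverts k D 0 = {[]}"
  by (auto simp: hverts_def)

lemma finite_hverts: "finite (hverts k D n)"
proof -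
  have "hverts k D n \<subseteq> {xs. set xs \<subseteq> {..<D-1} \<times> {..<k-1} \<and> length xs \<le> n}"
    by (auto simp: hverts_def)
  moreover have "finite {xs. set xs \<subseteq> {..<D-1} \<times> {..<k-1} \<and> length xs \<le> n}"
    by (rule finite_lists_length_le) auto
  ultimately show ?thesis by (rule finite_subset)
qed

lemma hedges_0: "hedges k D 0 = {}"
  by (auto simp: hedges_def)

lemma hedge_root:
  assumes "j < D - 1"
  shows "insert [] {[(j, i)] | i. i < k - 1} \<in> hedges k D (Suc n)"
  unfolding hedges_def using assms
  by (rule_tac CollectI, rule_tac x="[]" in exI, rule_tac x=j in exI) auto

lemma hedge_lift:
  assumes "e \<in> hedges k D n" "j < D - 1" "i < k - 1"
  shows "(#) (j, i) ` e \<in> hedges k D (Suc n)"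
proof -
  from assms(1) obtain v j' where e: "e = insert v {v @ [(j', i')] | i'. i' < k - 1}"
    and v: "v \<in> hverts k D n" "length v < n" "j' < D - 1"
    unfolding hedges_def by blast
  have "(#) (j, i) ` e = insert ((j,i)#v) {((j,i)#v) @ [(j', i')] | i'. i' < k - 1}"
    unfolding e by auto
  moreover have "(j,i)#v \<in> hverts k D (Suc n)" using v assms by simp
  ultimately show ?thesis unfolding hedges_def using v by fastforce
qed

lemma hedge_cases:
  assumes "e \<in> hedges k D (Suc n)"
  obtains j where "j < D - 1" "e = insert [] {[(j, i)] | i. i < k - 1}"
  | c e' where "fst c < D - 1" "snd c < k - 1" "e' \<in> hedges k D n" "e = (#) c ` e'"
proof -
  from assms obtain v j where e: "e = insert v {v @ [(j, i)] | i. i < k - 1}"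
    and v: "v \<in> hverts k D (Suc n)" "length v < Suc n" "j < D - 1"
    unfolding hedges_def by blast
  show ?thesis
  proof (cases v)
    case Nil
    then show ?thesis using that(1)[of j] e v by auto
  next
    case (Cons c w)
    let ?e' = "insert w {w @ [(j, i)] | i. i < k - 1}"
    have "?e' \<in> hedges k D n" unfolding hedges_def using v Cons by auto
    moreover have "e = (#) c ` ?e'" unfolding e Cons by auto
    ultimately show ?thesis using that(2)[of c ?e'] v Cons by auto
  qed
qed

lemma sub_build[simp]: "j < d \<Longrightarrow> i < m \<Longrightarrow> sub (j, i) (build b G d m) = G j i"
  by (auto simp: sub_def)

lemma build_cong: "(\<And>j i. j < d \<Longrightarrow> i < m \<Longrightarrow> G j i = G' j i) \<Longrightarrow> build b G d m = build b G' d m"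
  by (auto simp: build_def)

lemma build_sub:
  assumes "S \<subseteq> hverts k D (Suc n)"
  shows "build ([] \<in> S) (\<lambda>j i. sub (j, i) S) (D - 1) (k - 1) = S"
proof (rule set_eqI)
  fix v show "v \<in> build ([] \<in> S) (\<lambda>j i. sub (j, i) S) (D - 1) (k - 1) \<longleftrightarrow> v \<in> S"
  proof (cases v)
    case (Cons c w)
    then show ?thesis using assms by (cases c) (auto simp: sub_def)
  qed simp
qed

lemma sub_hverts: "S \<subseteq> hverts k D (Suc n) \<Longrightarrow> sub c S \<subseteq> hverts k D n"
  by (auto simp: sub_def)

lemma build_hverts:
  "(\<And>j i. j < D - 1 \<Longrightarrow> i < k - 1 \<Longrightarrow> G j i \<subseteq> hverts k D n) \<Longrightarrow> build b G (D - 1) (k - 1) \<subseteq> hverts k D (Suc n)"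
proof
  fix v assume G: "\<And>j i. j < D - 1 \<Longrightarrow> i < k - 1 \<Longrightarrow> G j i \<subseteq> hverts k D n"
    and v: "v \<in> build b G (D - 1) (k - 1)"
  show "v \<in> hverts k D (Suc n)"
  proof (cases v)
    case (Cons c w)
    then show ?thesis using v G by auto
  qed simp
qed

lemma build_indep:
  assumes G: "\<And>j i. j < D - 1 \<Longrightarrow> i < k - 1 \<Longrightarrow> G j i \<subseteq> hverts k D n"
  shows "build b G (D - 1) (k - 1) \<in> indep_sets k D (Suc n) \<longleftrightarrow>
    (\<forall>j<D - 1. \<forall>i<k - 1. G j i \<in> indep_sets k D n) \<and> (b \<longrightarrow> (\<forall>j<D - 1. \<exists>i<k - 1. [] \<notin> G j i))"
    (is "?B \<in> _ \<longleftrightarrow> ?R")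
proof
  assume B: "?B \<in> indep_sets k D (Suc n)"
  have 1: "\<forall>j<D - 1. \<forall>i<k - 1. G j i \<in> indep_sets k D n"
  proof (intro allI impI)
    fix j i assume ji: "j < D - 1" "i < k - 1"
    show "G j i \<in> indep_sets k D n" unfolding indep_sets_def
    proof (intro CollectI conjI ballI)
      show "G j i \<subseteq> hverts k D n" using G ji .
      fix e assume e: "e \<in> hedges k D n"
      show "\<not> e \<subseteq> G j i"
      proof
        assume "e \<subseteq> G j i"
        then have "(#) (j, i) ` e \<subseteq> ?B" using ji by auto
        moreover have "(#) (j, i) ` e \<in> hedges k D (Suc n)" using hedge_lift e ji .
        ultimately show False using B unfolding indep_sets_def by blast
      qed
    qed
  qed
  have 2: "b \<longrightarrow> (\<forall>j<D - 1. \<exists>i<k - 1. [] \<notin> G j i)"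
  proof (intro impI allI, rule ccontr)
    fix j assume b: b and j: "j < D - 1" and "\<not> (\<exists>i<k - 1. [] \<notin> G j i)"
    then have all: "\<forall>i<k - 1. [] \<in> G j i" by blast
    have "insert [] {[(j, i)] | i. i < k - 1} \<subseteq> ?B" using b all j by auto
    moreover have "insert [] {[(j, i)] | i. i < k - 1} \<in> hedges k D (Suc n)" using hedge_root j .
    ultimately show False using B unfolding indep_sets_def by blast
  qed
  show ?R using 1 2 by blast
next
  assume R: ?R
  show "?B \<in> indep_sets k D (Suc n)" unfolding indep_sets_def
  proof (intro CollectI conjI ballI)
    show "?B \<subseteq> hverts k D (Suc n)" using build_hverts G .
    fix e assume e: "e \<in> hedges k D (Suc n)"
    show "\<not> e \<subseteq> ?B"
    proof (cases rule: hedge_cases[OF e])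
      case (1 j)
      show ?thesis
      proof
        assume sub: "e \<subseteq> ?B"
        then have b: b using 1 by auto
        then obtain i where i: "i < k - 1" "[] \<notin> G j i" using R 1 by blast
        have "[(j, i)] \<in> e" using 1 i by auto
        then show False using sub i by auto
      qed
    next
      case (2 c e')
      show ?thesis
      proof
        assume sub: "e \<subseteq> ?B"
        have "e' \<subseteq> G (fst c) (snd c)" using sub 2 by auto
        moreover have "G (fst c) (snd c) \<in> indep_sets k D n" using R 2 by blast
        ultimately show False using 2 unfolding indep_sets_def by blast
      qed
    qed
  qed
qed

lemma level_Nil_Suc[simp]: "[] \<notin> level k D (Suc n)"
  by (simp add: level_def)

lemma level_Cons_Suc[simp]: "(c # w \<in> level k D (Suc n)) = (fst c < D - 1 \<and> snd c < k - 1 \<and> w \<in> level k D n)"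
  by (auto simp: level_def)

lemma level_sub_hverts: "level k D n \<subseteq> hverts k D n"
  by (auto simp: level_def)

lemma finite_level: "finite (level k D n)"
  using finite_subset[OF level_sub_hverts finite_hverts] .

lemma build_level:
  assumes eta: "\<eta> \<subseteq> level k D (Suc n)"
  shows "build b G (D - 1) (k - 1) \<inter> level k D (Suc n) = \<eta> \<longleftrightarrow>
     (\<forall>j<D - 1. \<forall>i<k - 1. G j i \<inter> level k D n = sub (j, i) \<eta>)" (is "?L \<longleftrightarrow> ?R")
proof
  assume L: ?L
  show ?R
  proof (intro allI impI set_eqI)
    fix j i w assume ji: "j < D - 1" "i < k - 1"
    have "w \<in> G j i \<inter> level k D n \<longleftrightarrow> (j,i) # w \<in> build b G (D - 1) (k - 1) \<inter> level k D (Suc n)"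
      using ji by simp
    also have "\<dots> \<longleftrightarrow> w \<in> sub (j, i) \<eta>" unfolding L sub_def by simp
    finally show "w \<in> G j i \<inter> level k D n \<longleftrightarrow> w \<in> sub (j, i) \<eta>" .
  qed
next
  assume R: ?R
  show ?L
  proof (rule set_eqI)
    fix v show "v \<in> build b G (D - 1) (k - 1) \<inter> level k D (Suc n) \<longleftrightarrow> v \<in> \<eta>"
    proof (cases v)
      case Nil then show ?thesis using eta by auto
    next
      case (Cons c w)
      show ?thesis
      proof (cases "fst c < D - 1 \<and> snd c < k - 1")
        case True
        then have "w \<in> G (fst c) (snd c) \<inter> level k D n \<longleftrightarrow> w \<in> sub (fst c, snd c) \<eta>" using R by blast
        then show ?thesis using Cons True by (auto simp: sub_def)
      next
        case False
        then show ?thesis using Cons eta by auto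
      qed
    qed
  qed
qed

definition AS :: "nat \<Rightarrow> nat \<Rightarrow> nat \<Rightarrow> (nat \<times> nat) list set \<Rightarrow> (nat \<times> nat) list set set" where
  "AS k D n \<eta> = {S \<in> indep_sets k D n. S \<inter> level k D n = \<eta>}"

lemma finite_indep: "finite (indep_sets k D n)"
proof -
  have "indep_sets k D n \<subseteq> Pow (hverts k D n)" by (auto simp: indep_sets_def)
  then show ?thesis using finite_hverts by (rule finite_subset[OF _ finite_Pow_iff[THEN iffD2]])
qed

lemma finite_AS: "finite (AS k D n \<eta>)"
  unfolding AS_def using finite_indep by simp

lemma AS_indep: "S \<in> AS k D n \<eta> \<Longrightarrow> S \<in> indep_sets k D n"
  by (simp add: AS_def)


lemma bij_AS_Suc:
  assumes eta: "\<eta> \<subseteq> level k D (Suc n)"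
  shows "bij_betw (\<lambda>S. \<lambda>j\<in>{..<D - 1}. \<lambda>i\<in>{..<k - 1}. sub (j, i) S)
     {S \<in> AS k D (Suc n) \<eta>. ([] \<in> S) = b}
     (PiE {..<D - 1} (\<lambda>j. {g \<in> PiE {..<k - 1} (\<lambda>i. AS k D n (sub (j, i) \<eta>)). b \<longrightarrow> (\<exists>i<k - 1. [] \<notin> g i)}))"
proof (rule bij_betw_byWitness[where f' = "\<lambda>G. build b G (D - 1) (k - 1)"])
  let ?f = "\<lambda>S. \<lambda>j\<in>{..<D - 1}. \<lambda>i\<in>{..<k - 1}. sub (j, i) S"
  let ?A = "{S \<in> AS k D (Suc n) \<eta>. ([] \<in> S) = b}"
  let ?B = "PiE {..<D - 1} (\<lambda>j. {g \<in> PiE {..<k - 1} (\<lambda>i. AS k D n (sub (j, i) \<eta>)). b \<longrightarrow> (\<exists>i<k - 1. [] \<notin> g i)})"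
  have hv: "S \<subseteq> hverts k D (Suc n)" if "S \<in> indep_sets k D (Suc n)" for S
    using that by (simp add: indep_sets_def)
  have hvn: "S \<subseteq> hverts k D n" if "S \<in> indep_sets k D n" for S
    using that by (simp add: indep_sets_def)
  have bsS: "build ([] \<in> S) (\<lambda>j i. sub (j, i) S) (D - 1) (k - 1) = S" if "S \<in> ?A" for S
  proof (rule build_sub)
    show "S \<subseteq> hverts k D (Suc n)" using that hv by (auto simp: AS_def)
  qed
  show "\<forall>S\<in>?A. build b (?f S) (D - 1) (k - 1) = S"
  proof
    fix S assume S: "S \<in> ?A"
    have bS: "b = ([] \<in> S)" using S by simp
    have "build b (?f S) (D - 1) (k - 1) = build ([] \<in> S) (?f S) (D - 1) (k - 1)"
      using bS by simp
    also have "\<dots> = build ([] \<in> S) (\<lambda>j i. sub (j, i) S) (D - 1) (k - 1)"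
      by (rule build_cong) simp
    also have "\<dots> = S" using bsS S by blast
    finally show "build b (?f S) (D - 1) (k - 1) = S" .
  qed
  show "\<forall>G\<in>?B. ?f (build b G (D - 1) (k - 1)) = G"
  proof
    fix G assume G: "G \<in> ?B"
    show "?f (build b G (D - 1) (k - 1)) = G"
    proof (rule ext)
      fix j show "?f (build b G (D - 1) (k - 1)) j = G j"
      proof (cases "j < D - 1")
        case True
        then have Gj: "G j \<in> PiE {..<k - 1} (\<lambda>i. AS k D n (sub (j, i) \<eta>))" using G by auto
        show ?thesis
        proof (rule ext)
          fix i show "?f (build b G (D - 1) (k - 1)) j i = G j i"
          proof (cases "i < k - 1")
            case True2: True
            then show ?thesis using True by simp
          next
            case False
            then have "G j i = undefined" using Gj by (intro PiE_arb) auto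
            then show ?thesis using False True by simp
          qed
        qed
      next
        case False
        then have "G j = undefined" using G by (intro PiE_arb) auto
        then show ?thesis using False by simp
      qed
    qed
  qed
  show "?f ` ?A \<subseteq> ?B"
  proof
    fix T assume "T \<in> ?f ` ?A"
    then obtain S where S: "S \<in> ?A" and T: "T = ?f S" by blast
    have Sb: "S = build b (\<lambda>j i. sub (j, i) S) (D - 1) (k - 1)"
    proof -
      have e: "([] \<in> S) = b" using S by simp
      show ?thesis using bsS[OF S] unfolding e by (rule sym)
    qed
    have subs: "\<And>j i. j < D - 1 \<Longrightarrow> i < k - 1 \<Longrightarrow> sub (j, i) S \<subseteq> hverts k D n"
      using sub_hverts hv S by (auto simp: AS_def)
    have ind: "build b (\<lambda>j i. sub (j, i) S) (D - 1) (k - 1) \<in> indep_sets k D (Suc n)"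
      unfolding Sb[symmetric] using S by (simp add: AS_def)
    have I: "(\<forall>j<D - 1. \<forall>i<k - 1. sub (j, i) S \<in> indep_sets k D n) \<and> (b \<longrightarrow> (\<forall>j<D - 1. \<exists>i<k - 1. [] \<notin> sub (j, i) S))"
      using build_indep[where G="\<lambda>j i. sub (j, i) S" and b=b and n=n and k=k and D=D] subs ind by blast
    have lev: "build b (\<lambda>j i. sub (j, i) S) (D - 1) (k - 1) \<inter> level k D (Suc n) = \<eta>"
      unfolding Sb[symmetric] using S by (simp add: AS_def)
    have L: "\<forall>j<D - 1. \<forall>i<k - 1. sub (j, i) S \<inter> level k D n = sub (j, i) \<eta>"
      using build_level[where G="\<lambda>j i. sub (j, i) S" and b=b, OF eta] lev by blast
    show "T \<in> ?B" unfolding T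
    proof (rule restrict_PiE_iff[THEN iffD2], intro ballI CollectI conjI impI)
      fix j assume j: "j \<in> {..<D - 1}"
      show "(\<lambda>i\<in>{..<k - 1}. sub (j, i) S) \<in> PiE {..<k - 1} (\<lambda>i. AS k D n (sub (j, i) \<eta>))"
        using I L j by (simp add: AS_def restrict_PiE_iff)
      assume b
      then show "\<exists>i<k - 1. [] \<notin> (\<lambda>i\<in>{..<k - 1}. sub (j, i) S) i" using I j by auto
    qed
  qed
  show "(\<lambda>G. build b G (D - 1) (k - 1)) ` ?B \<subseteq> ?A"
  proof
    fix S assume "S \<in> (\<lambda>G. build b G (D - 1) (k - 1)) ` ?B"
    then obtain G where G: "G \<in> ?B" and S: "S = build b G (D - 1) (k - 1)" by blast
    have GA: "\<And>j i. j < D - 1 \<Longrightarrow> i < k - 1 \<Longrightarrow> G j i \<in> AS k D n (sub (j, i) \<eta>)"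
      using G by auto
    have subs: "\<And>j i. j < D - 1 \<Longrightarrow> i < k - 1 \<Longrightarrow> G j i \<subseteq> hverts k D n"
      using GA hvn by (auto simp: AS_def)
    have "S \<in> indep_sets k D (Suc n)" unfolding S
      using build_indep[OF subs] GA G by (auto simp: AS_def)
    moreover have "S \<inter> level k D (Suc n) = \<eta>" unfolding S
      using build_level[OF eta] GA by (auto simp: AS_def)
    ultimately show "S \<in> ?A" using S by (auto simp: AS_def)
  qed
qed


definition AS1 :: "nat \<Rightarrow> nat \<Rightarrow> nat \<Rightarrow> (nat \<times> nat) list set \<Rightarrow> (nat \<times> nat) list set set" where
  "AS1 k D n \<eta> = {S \<in> AS k D n \<eta>. [] \<in> S}"

lemma crp_AS: "cond_root_prob k D n \<eta> = real (card (AS1 k D n \<eta>)) / real (card (AS k D n \<eta>))"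
proof -
  have "{S \<in> indep_sets k D n. [] \<in> S \<and> S \<inter> level k D n = \<eta>} = AS1 k D n \<eta>"
    by (auto simp: AS1_def AS_def)
  moreover have "{S \<in> indep_sets k D n. S \<inter> level k D n = \<eta>} = AS k D n \<eta>"
    by (auto simp: AS_def)
  ultimately show ?thesis by (simp add: cond_root_prob_def)
qed

lemma finite_AS1: "finite (AS1 k D n \<eta>)"
  using finite_AS by (simp add: AS1_def)

lemma AS1_sub: "AS1 k D n \<eta> \<subseteq> AS k D n \<eta>"
  by (auto simp: AS1_def)

lemma card_AS1_le: "card (AS1 k D n \<eta>) \<le> card (AS k D n \<eta>)"
  by (rule card_mono[OF finite_AS AS1_sub])

lemma eta_in_AS:
  assumes "\<eta> \<subseteq> level k D n"
  shows "\<eta> \<in> AS k D n \<eta>"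
proof -
  have "\<eta> \<subseteq> hverts k D n" using assms level_sub_hverts by blast
  moreover have "\<not> e \<subseteq> \<eta>" if "e \<in> hedges k D n" for e
  proof
    assume sub: "e \<subseteq> \<eta>"
    from that obtain v j where e: "e = insert v {v @ [(j, i)] | i. i < k - 1}" and "length v < n"
      unfolding hedges_def by blast
    then have "v \<in> \<eta>" using sub by auto
    then have "length v = n" using assms by (auto simp: level_def)
    then show False using \<open>length v < n\<close> by simp
  qed
  ultimately show ?thesis using assms by (auto simp: AS_def indep_sets_def)
qed

lemma card_AS_pos: "\<eta> \<subseteq> level k D n \<Longrightarrow> card (AS k D n \<eta>) > 0"
  using eta_in_AS finite_AS by (metis card_gt_0_iff empty_iff)

lemma sub_level: "\<eta> \<subseteq> level k D (Suc n) \<Longrightarrow> sub c \<eta> \<subseteq> level k D n"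
  by (auto simp: sub_def)

lemma card_root_out:
  assumes eta: "\<eta> \<subseteq> level k D (Suc n)"
  shows "card {S \<in> AS k D (Suc n) \<eta>. ([] \<in> S) = False} =
    (\<Prod>j<D - 1. \<Prod>i<k - 1. card (AS k D n (sub (j, i) \<eta>)))"
proof -
  have "card {S \<in> AS k D (Suc n) \<eta>. ([] \<in> S) = False} =
     card (PiE {..<D - 1} (\<lambda>j. {g \<in> PiE {..<k - 1} (\<lambda>i. AS k D n (sub (j, i) \<eta>)). False \<longrightarrow> (\<exists>i<k - 1. [] \<notin> g i)}))"
    by (rule bij_betw_same_card[OF bij_AS_Suc[OF eta]])
  also have "\<dots> = (\<Prod>j<D - 1. card (PiE {..<k - 1} (\<lambda>i. AS k D n (sub (j, i) \<eta>))))"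
    by (simp add: card_PiE)
  also have "\<dots> = (\<Prod>j<D - 1. \<Prod>i<k - 1. card (AS k D n (sub (j, i) \<eta>)))"
    by (simp add: card_PiE)
  finally show ?thesis .
qed

lemma card_root_in:
  assumes eta: "\<eta> \<subseteq> level k D (Suc n)"
  shows "card {S \<in> AS k D (Suc n) \<eta>. ([] \<in> S) = True} =
    (\<Prod>j<D - 1. (\<Prod>i<k - 1. card (AS k D n (sub (j, i) \<eta>))) - (\<Prod>i<k - 1. card (AS1 k D n (sub (j, i) \<eta>))))"
proof -
  have "card {S \<in> AS k D (Suc n) \<eta>. ([] \<in> S) = True} =
     card (PiE {..<D - 1} (\<lambda>j. {g \<in> PiE {..<k - 1} (\<lambda>i. AS k D n (sub (j, i) \<eta>)). True \<longrightarrow> (\<exists>i<k - 1. [] \<notin> g i)}))"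
    by (rule bij_betw_same_card[OF bij_AS_Suc[OF eta]])
  also have "\<dots> = (\<Prod>j<D - 1. card {g \<in> PiE {..<k - 1} (\<lambda>i. AS k D n (sub (j, i) \<eta>)). True \<longrightarrow> (\<exists>i<k - 1. [] \<notin> g i)})"
    by (simp add: card_PiE)
  also have "\<dots> = (\<Prod>j<D - 1. (\<Prod>i<k - 1. card (AS k D n (sub (j, i) \<eta>))) - (\<Prod>i<k - 1. card (AS1 k D n (sub (j, i) \<eta>))))"
  proof (rule prod.cong[OF refl])
    fix j
    let ?A = "\<lambda>i. AS k D n (sub (j, i) \<eta>)"
    let ?A1 = "\<lambda>i. AS1 k D n (sub (j, i) \<eta>)"
    have eq: "{g \<in> PiE {..<k - 1} ?A. True \<longrightarrow> (\<exists>i<k - 1. [] \<notin> g i)} = PiE {..<k - 1} ?A - PiE {..<k - 1} ?A1"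
    proof (rule set_eqI)
      fix g
      show "g \<in> {g \<in> PiE {..<k - 1} ?A. True \<longrightarrow> (\<exists>i<k - 1. [] \<notin> g i)} \<longleftrightarrow> g \<in> PiE {..<k - 1} ?A - PiE {..<k - 1} ?A1"
      proof (cases "g \<in> PiE {..<k - 1} ?A")
        case True
        then have "g \<in> extensional {..<k - 1}" "\<forall>i<k - 1. g i \<in> ?A i" by (auto simp: PiE_iff)
        then show ?thesis using True by (auto simp: PiE_iff AS1_def)
      qed simp
    qed
    have sub: "PiE {..<k - 1} ?A1 \<subseteq> PiE {..<k - 1} ?A"
      by (rule PiE_mono) (use AS1_sub in blast)
    have fin: "finite (PiE {..<k - 1} ?A1)"
      by (rule finite_PiE) (auto simp: finite_AS1)
    show "card {g \<in> PiE {..<k - 1} ?A. True \<longrightarrow> (\<exists>i<k - 1. [] \<notin> g i)} =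
      (\<Prod>i<k - 1. card (?A i)) - (\<Prod>i<k - 1. card (?A1 i))"
      unfolding eq card_Diff_subset[OF fin sub] by (simp add: card_PiE)
  qed
  finally show ?thesis .
qed

lemma prob_Suc:
  assumes eta: "\<eta> \<subseteq> level k D (Suc n)"
  defines "R \<equiv> (\<Prod>j<D - 1. 1 - (\<Prod>i<k - 1. cond_root_prob k D n (sub (j, i) \<eta>)))"
  shows "cond_root_prob k D (Suc n) \<eta> = R / (1 + R)"
proof -
  define N where "N j i = real (card (AS k D n (sub (j, i) \<eta>)))" for j i
  define M where "M j i = real (card (AS1 k D n (sub (j, i) \<eta>)))" for j i
  have Npos: "N j i > 0" for j i
    unfolding N_def using card_AS_pos[OF sub_level[OF eta]] by simp
  have MN: "M j i \<le> N j i" for j i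
    unfolding M_def N_def using card_AS1_le by simp
  have M0: "0 \<le> M j i" for j i unfolding M_def by simp
  have p: "cond_root_prob k D n (sub (j, i) \<eta>) = M j i / N j i" for j i
    unfolding crp_AS M_def N_def ..
  define Y where "Y = (\<Prod>j<D - 1. \<Prod>i<k - 1. N j i)"
  have Ypos: "Y > 0" unfolding Y_def using Npos by (simp add: prod_pos)
  have out: "real (card {S \<in> AS k D (Suc n) \<eta>. ([] \<in> S) = False}) = Y"
    unfolding card_root_out[OF eta] Y_def N_def by simp
  have inn: "real (card {S \<in> AS k D (Suc n) \<eta>. ([] \<in> S) = True}) = Y * R"
  proof -
    have le: "(\<Prod>i<k - 1. card (AS1 k D n (sub (j, i) \<eta>))) \<le> (\<Prod>i<k - 1. card (AS k D n (sub (j, i) \<eta>)))" for j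
      by (rule prod_mono) (simp add: card_AS1_le)
    have "real (card {S \<in> AS k D (Suc n) \<eta>. ([] \<in> S) = True}) =
      (\<Prod>j<D - 1. (\<Prod>i<k - 1. N j i) - (\<Prod>i<k - 1. M j i))"
      unfolding card_root_in[OF eta] of_nat_prod N_def M_def
      by (rule prod.cong[OF refl], subst of_nat_diff[OF le], simp add: of_nat_prod)
    also have "\<dots> = (\<Prod>j<D - 1. (\<Prod>i<k - 1. N j i) * (1 - (\<Prod>i<k - 1. M j i / N j i)))"
    proof (rule prod.cong[OF refl])
      fix j
      have "(\<Prod>i<k - 1. M j i / N j i) = (\<Prod>i<k - 1. M j i) / (\<Prod>i<k - 1. N j i)"
        by (rule prod_dividef)
      moreover have "(\<Prod>i<k - 1. N j i) > 0" using Npos by (simp add: prod_pos)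
      ultimately show "(\<Prod>i<k - 1. N j i) - (\<Prod>i<k - 1. M j i) = (\<Prod>i<k - 1. N j i) * (1 - (\<Prod>i<k - 1. M j i / N j i))"
      proof -
        have gen: "P - Q = P * (1 - Q / P)" if "P > 0" for P Q :: real using that by (simp add: field_simps)
        show ?thesis unfolding \<open>(\<Prod>i<k - 1. M j i / N j i) = _\<close>
          by (rule gen) (use \<open>(\<Prod>i<k - 1. N j i) > 0\<close> in simp)
      qed
    qed
    also have "\<dots> = Y * R"
      unfolding R_def Y_def p prod.distrib ..
    finally show ?thesis .
  qed
  have split: "AS k D (Suc n) \<eta> = {S \<in> AS k D (Suc n) \<eta>. ([] \<in> S) = False} \<union> {S \<in> AS k D (Suc n) \<eta>. ([] \<in> S) = True}"
    by auto
  have "card (AS k D (Suc n) \<eta>) = card {S \<in> AS k D (Suc n) \<eta>. ([] \<in> S) = False} + card {S \<in> AS k D (Suc n) \<eta>. ([] \<in> S) = True}"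
    by (subst split, rule card_Un_disjoint) (auto intro: finite_subset[OF _ finite_AS])
  moreover have "AS1 k D (Suc n) \<eta> = {S \<in> AS k D (Suc n) \<eta>. ([] \<in> S) = True}"
    by (auto simp: AS1_def)
  ultimately have "cond_root_prob k D (Suc n) \<eta> = (Y * R) / (Y + Y * R)"
    unfolding crp_AS using out inn by simp
  also have "\<dots> = (Y * R) / (Y * (1 + R))" by (simp add: algebra_simps)
  also have "\<dots> = R / (1 + R)" using Ypos by simp
  finally show ?thesis .
qed


definition ff :: "nat \<Rightarrow> nat \<Rightarrow> real \<Rightarrow> real" where
  "ff k D z = (1 - z ^ (k - 1)) ^ (D - 1) / (1 + (1 - z ^ (k - 1)) ^ (D - 1))"

lemma tfrac_mono: "0 \<le> s \<Longrightarrow> s \<le> t \<Longrightarrow> s / (1 + s) \<le> t / (1 + (t::real))"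
  by (simp add: field_simps)

lemma ff_antimono:
  assumes "0 \<le> a" "a \<le> b" "b \<le> 1"
  shows "ff k D b \<le> ff k D a"
proof -
  have "b ^ (k - 1) \<le> 1" using assms by (simp add: power_le_one)
  have "a ^ (k - 1) \<le> b ^ (k - 1)" using assms by (simp add: power_mono)
  then have "(1 - b ^ (k - 1)) ^ (D - 1) \<le> (1 - a ^ (k - 1)) ^ (D - 1)"
    using \<open>b ^ (k - 1) \<le> 1\<close> by (intro power_mono) auto
  then show ?thesis unfolding ff_def
    by (rule tfrac_mono[rotated]) (use \<open>b ^ (k - 1) \<le> 1\<close> in simp)
qed

lemma ff_range:
  assumes "0 \<le> a" "a \<le> 1"
  shows "0 \<le> ff k D a" "ff k D a \<le> 1"
proof -
  have "a ^ (k - 1) \<le> 1" using assms by (simp add: power_le_one)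
  then have "0 \<le> (1 - a ^ (k - 1)) ^ (D - 1)" by simp
  then show "0 \<le> ff k D a" "ff k D a \<le> 1" unfolding ff_def by (auto simp: field_simps)
qed

lemma iter_range: "0 \<le> a \<Longrightarrow> a \<le> 1 \<Longrightarrow> 0 \<le> (ff k D ^^ n) a \<and> (ff k D ^^ n) a \<le> 1"
  by (induction n) (auto intro: ff_range)

lemma crp_range: "0 \<le> cond_root_prob k D n \<eta> \<and> cond_root_prob k D n \<eta> \<le> 1"
proof -
  have "real (card (AS1 k D n \<eta>)) \<le> real (card (AS k D n \<eta>))" using card_AS1_le by simp
  then show ?thesis unfolding crp_AS by (auto simp: divide_le_eq_1)
qed

lemma level_0: "level k D 0 = {[]}"
  by (auto simp: level_def hverts_def)

lemma indep_0: "indep_sets k D 0 = Pow {[]}"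
  by (auto simp: indep_sets_def hedges_0 hverts_0)

lemma crp_0_empty: "cond_root_prob k D 0 {} = 0"
proof -
  have "AS1 k D 0 {} = {}" by (auto simp: AS1_def AS_def level_0)
  then show ?thesis unfolding crp_AS by simp
qed

lemma crp_0_full: "cond_root_prob k D 0 {[]} = 1"
proof -
  have "AS k D 0 {[]} = {{[]}}" by (auto simp: AS_def level_0 indep_0)
  moreover have "AS1 k D 0 {[]} = {{[]}}" by (auto simp: AS1_def AS_def level_0 indep_0)
  ultimately show ?thesis unfolding crp_AS by simp
qed

lemma sub_empty[simp]: "sub c {} = {}"
  by (simp add: sub_def)

lemma sub_level_full: "j < D - 1 \<Longrightarrow> i < k - 1 \<Longrightarrow> sub (j, i) (level k D (Suc n)) = level k D n"
  by (auto simp: sub_def)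

lemma prob_Suc_const:
  assumes eta: "\<eta> \<subseteq> level k D (Suc n)"
    and c: "\<And>j i. j < D - 1 \<Longrightarrow> i < k - 1 \<Longrightarrow> cond_root_prob k D n (sub (j, i) \<eta>) = z"
  shows "cond_root_prob k D (Suc n) \<eta> = ff k D z"
  unfolding prob_Suc[OF eta] ff_def using c by simp

lemma crp_empty: "cond_root_prob k D n {} = (ff k D ^^ n) 0"
proof (induction n)
  case 0 then show ?case using crp_0_empty by simp
next
  case (Suc n)
  show ?case using prob_Suc_const[of "{}" k D n "(ff k D ^^ n) 0"] Suc by simp
qed

lemma crp_full: "cond_root_prob k D n (level k D n) = (ff k D ^^ n) 1"
proof (induction n)
  case 0 then show ?case using crp_0_full by (simp add: level_0)
next
  case (Suc n)
  show ?case using prob_Suc_const[of "level k D (Suc n)" k D n "(ff k D ^^ n) 1"] Suc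
    by (simp add: sub_level_full)
qed

lemma prob_Suc_bounds:
  assumes eta: "\<eta> \<subseteq> level k D (Suc n)"
    and lo: "0 \<le> lo" and lohi: "lo \<le> hi" and hi: "hi \<le> 1"
    and c: "\<And>j i. j < D - 1 \<Longrightarrow> i < k - 1 \<Longrightarrow> lo \<le> cond_root_prob k D n (sub (j, i) \<eta>) \<and> cond_root_prob k D n (sub (j, i) \<eta>) \<le> hi"
  shows "ff k D hi \<le> cond_root_prob k D (Suc n) \<eta> \<and> cond_root_prob k D (Suc n) \<eta> \<le> ff k D lo"
proof -
  let ?p = "\<lambda>j i. cond_root_prob k D n (sub (j, i) \<eta>)"
  let ?R = "(\<Prod>j<D - 1. 1 - (\<Prod>i<k - 1. ?p j i))"
  have P1: "lo ^ (k - 1) \<le> (\<Prod>i<k - 1. ?p j i)" if "j < D - 1" for j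
    using prod_mono[of "{..<k - 1}" "\<lambda>i. lo" "\<lambda>i. ?p j i"] c that lo by simp
  have P2: "(\<Prod>i<k - 1. ?p j i) \<le> hi ^ (k - 1)" if "j < D - 1" for j
    using prod_mono[of "{..<k - 1}" "\<lambda>i. ?p j i" "\<lambda>i. hi"] c that crp_range by simp
  have hi1: "hi ^ (k - 1) \<le> 1" using lo lohi hi by (simp add: power_le_one)
  have R1: "(1 - hi ^ (k - 1)) ^ (D - 1) \<le> ?R"
    using prod_mono[of "{..<D - 1}" "\<lambda>j. 1 - hi ^ (k - 1)" "\<lambda>j. 1 - (\<Prod>i<k - 1. ?p j i)"] P2 hi1 by simp
  have R2: "?R \<le> (1 - lo ^ (k - 1)) ^ (D - 1)"
  proof -
    have "?R \<le> (\<Prod>j<D - 1. 1 - lo ^ (k - 1))"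
    proof (rule prod_mono)
      fix j assume j: "j \<in> {..<D - 1}"
      have "(\<Prod>i<k - 1. ?p j i) \<le> 1" using P2[of j] hi1 j by simp
      then show "0 \<le> 1 - (\<Prod>i<k - 1. ?p j i) \<and> 1 - (\<Prod>i<k - 1. ?p j i) \<le> 1 - lo ^ (k - 1)"
        using P1[of j] j by simp
    qed
    then show ?thesis by simp
  qed
  have R0: "0 \<le> (1 - hi ^ (k - 1)) ^ (D - 1)" using hi1 by simp
  show ?thesis unfolding prob_Suc[OF eta] ff_def
    using tfrac_mono[OF R0 R1] tfrac_mono[OF order_trans[OF R0 R1] R2] by simp
qed

lemma crp_bounds:
  assumes "\<eta> \<subseteq> level k D n"
  shows "min ((ff k D ^^ n) 0) ((ff k D ^^ n) 1) \<le> cond_root_prob k D n \<eta> \<and>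
         cond_root_prob k D n \<eta> \<le> max ((ff k D ^^ n) 0) ((ff k D ^^ n) 1)"
  using assms
proof (induction n arbitrary: \<eta>)
  case 0 then show ?case using crp_range by simp
next
  case (Suc n)
  let ?u = "(ff k D ^^ n) 0" and ?v = "(ff k D ^^ n) 1"
  have u: "0 \<le> ?u \<and> ?u \<le> 1" and v: "0 \<le> ?v \<and> ?v \<le> 1"
    using iter_range[where a=0 and k=k and D=D and n=n] iter_range[where a=1 and k=k and D=D and n=n] by auto
  have B: "ff k D (max ?u ?v) \<le> cond_root_prob k D (Suc n) \<eta> \<and> cond_root_prob k D (Suc n) \<eta> \<le> ff k D (min ?u ?v)"
    by (rule prob_Suc_bounds[OF Suc.prems]) (use u v Suc.IH[OF sub_level[OF Suc.prems]] in auto)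
  have "ff k D (max ?u ?v) = min (ff k D ?u) (ff k D ?v)"
    using u v ff_antimono[of ?u ?v k D] ff_antimono[of ?v ?u k D] by (auto simp: max_def min_def)
  moreover have "ff k D (min ?u ?v) = max (ff k D ?u) (ff k D ?v)"
    using u v ff_antimono[of ?u ?v k D] ff_antimono[of ?v ?u k D] by (auto simp: max_def min_def)
  ultimately show ?case using B by simp
qed

lemma gap_eq: "boundary_gap k D n = \<bar>(ff k D ^^ n) 0 - (ff k D ^^ n) 1\<bar>"
proof -
  let ?S = "{\<bar>cond_root_prob k D n \<eta> - cond_root_prob k D n \<eta>'\<bar> | \<eta> \<eta>'. \<eta> \<subseteq> level k D n \<and> \<eta>' \<subseteq> level k D n}"
  have fin: "finite ?S"
  proof -
    have "?S = (\<lambda>(\<eta>, \<eta>'). \<bar>cond_root_prob k D n \<eta> - cond_root_prob k D n \<eta>'\<bar>) ` (Pow (level k D n) \<times> Pow (level k D n))"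
      by auto
    then show ?thesis using finite_level by simp
  qed
  show ?thesis unfolding boundary_gap_def
  proof (rule Max_eqI[OF fin])
    fix y assume "y \<in> ?S"
    then obtain \<eta> \<eta>' where y: "y = \<bar>cond_root_prob k D n \<eta> - cond_root_prob k D n \<eta>'\<bar>"
      and e: "\<eta> \<subseteq> level k D n" "\<eta>' \<subseteq> level k D n" by blast
    show "y \<le> \<bar>(ff k D ^^ n) 0 - (ff k D ^^ n) 1\<bar>"
      using crp_bounds[OF e(1)] crp_bounds[OF e(2)] unfolding y by (auto simp: abs_if min_def max_def split: if_splits)
  next
    show "\<bar>(ff k D ^^ n) 0 - (ff k D ^^ n) 1\<bar> \<in> ?S"
      using crp_empty[of k D n] crp_full[of k D n]
      by (metis (mono_tags, lifting) empty_subsetI mem_Collect_eq order_refl)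
  qed
qed


lemma even_odd_LIMSEQ:
  fixes X :: "nat \<Rightarrow> real"
  assumes e: "(\<lambda>n. X (2 * n)) \<longlonglongrightarrow> L" and o: "(\<lambda>n. X (2 * n + 1)) \<longlonglongrightarrow> L"
  shows "X \<longlonglongrightarrow> L"
proof (rule LIMSEQ_I)
  fix r :: real assume r: "0 < r"
  obtain N1 where N1: "\<forall>n\<ge>N1. norm (X (2 * n) - L) < r" using LIMSEQ_D[OF e r] by blast
  obtain N2 where N2: "\<forall>n\<ge>N2. norm (X (2 * n + 1) - L) < r" using LIMSEQ_D[OF o r] by blast
  show "\<exists>N. \<forall>n\<ge>N. norm (X n - L) < r"
  proof (intro exI allI impI)
    fix n assume n: "2 * (N1 + N2) \<le> n"
    show "norm (X n - L) < r"
    proof (cases "even n")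
      case True
      then obtain q where q: "n = 2 * q" by blast
      then have "q \<ge> N1" using n by simp
      then show ?thesis using N1 q by simp
    next
      case False
      then obtain q where q: "n = 2 * q + 1" using oddE by blast
      then have "q \<ge> N2" using n by simp
      then show ?thesis using N2 q by simp
    qed
  qed
qed

lemma uniq_iff:
  assumes nn: "\<And>n. 0 \<le> boundary_gap k D n"
  shows "has_uniqueness k D \<longleftrightarrow> (\<lambda>n. boundary_gap k D n) \<longlonglongrightarrow> 0"
proof
  assume "has_uniqueness k D"
  then have ls: "limsup (\<lambda>n. ereal (boundary_gap k D n)) = 0" by (simp add: has_uniqueness_def)
  have "0 \<le> liminf (\<lambda>n. ereal (boundary_gap k D n))"
    by (rule Liminf_bounded) (use nn in simp)
  moreover have "liminf (\<lambda>n. ereal (boundary_gap k D n)) \<le> limsup (\<lambda>n. ereal (boundary_gap k D n))"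
    by (rule Liminf_le_Limsup) simp
  ultimately have "liminf (\<lambda>n. ereal (boundary_gap k D n)) = 0" using ls by simp
  then have "(\<lambda>n. ereal (boundary_gap k D n)) \<longlonglongrightarrow> ereal 0"
    using Liminf_eq_Limsup[OF _ _ ls] by (simp add: zero_ereal_def)
  then show "(\<lambda>n. boundary_gap k D n) \<longlonglongrightarrow> 0" by simp
next
  assume "(\<lambda>n. boundary_gap k D n) \<longlonglongrightarrow> 0"
  then have "(\<lambda>n. ereal (boundary_gap k D n)) \<longlonglongrightarrow> ereal 0" by simp
  then have "limsup (\<lambda>n. ereal (boundary_gap k D n)) = ereal 0" by (rule lim_imp_Limsup[rotated]) simp
  then show "has_uniqueness k D" by (simp add: has_uniqueness_def zero_ereal_def)
qed

context
  fixes k D :: nat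
  assumes k2: "k \<ge> 2" and D2: "D \<ge> 2"
begin

lemma ff_strict:
  assumes "0 \<le> a" "a < b" "b \<le> 1"
  shows "ff k D b < ff k D a"
proof -
  have "b ^ (k - 1) \<le> 1" using assms by (simp add: power_le_one)
  have "a ^ (k - 1) < b ^ (k - 1)" using assms k2 by (intro power_strict_mono) auto
  then have "(1 - b ^ (k - 1)) ^ (D - 1) < (1 - a ^ (k - 1)) ^ (D - 1)"
    using \<open>b ^ (k - 1) \<le> 1\<close> D2 by (intro power_strict_mono) auto
  moreover have "0 \<le> (1 - b ^ (k - 1)) ^ (D - 1)" using \<open>b ^ (k - 1) \<le> 1\<close> by simp
  ultimately show ?thesis unfolding ff_def by (simp add: field_simps)
qed

lemma ff_0: "ff k D 0 = 1 / 2"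
  using k2 by (simp add: ff_def power_0_left)

lemma ff_1: "ff k D 1 = 0"
  using D2 by (simp add: ff_def power_0_left)

lemma ff_pos: "0 \<le> z \<Longrightarrow> z < 1 \<Longrightarrow> ff k D z > 0"
proof -
  assume z: "0 \<le> z" "z < 1"
  have "z ^ (k - 1) < 1" using z k2 by (simp add: power_less_one_iff)
  then have "0 < (1 - z ^ (k - 1)) ^ (D - 1)" by simp
  then show ?thesis unfolding ff_def by (simp add: field_simps)
qed

lemma ff_le_half: "0 \<le> z \<Longrightarrow> z \<le> 1 \<Longrightarrow> ff k D z \<le> 1 / 2"
proof -
  assume z: "0 \<le> z" "z \<le> 1"
  have "z ^ (k - 1) \<le> 1" using z by (simp add: power_le_one)
  then have "(1 - z ^ (k - 1)) ^ (D - 1) \<le> 1" "0 \<le> (1 - z ^ (k - 1)) ^ (D - 1)" using z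
    by (auto intro: power_le_one)
  then show ?thesis unfolding ff_def by (simp add: field_simps)
qed

lemma ff_isCont: "0 \<le> z \<Longrightarrow> z \<le> 1 \<Longrightarrow> isCont (ff k D) z"
proof -
  assume z: "0 \<le> z" "z \<le> 1"
  have "z ^ (k - 1) \<le> 1" using z by (simp add: power_le_one)
  then have "0 \<le> (1 - z ^ (k - 1)) ^ (D - 1)" by simp
  then have "1 + (1 - z ^ (k - 1)) ^ (D - 1) \<noteq> 0" by linarith
  then show ?thesis unfolding ff_def[abs_def] by (intro continuous_intros) auto
qed


lemma gap_Suc: "boundary_gap k D (Suc n) = \<bar>(ff k D ^^ Suc n) 0 - (ff k D ^^ n) 0\<bar>"
proof -
  have "(ff k D ^^ Suc n) 1 = (ff k D ^^ n) (ff k D 1)" by (simp add: funpow_Suc_right del: funpow.simps)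
  then have "(ff k D ^^ Suc n) 1 = (ff k D ^^ n) 0" using ff_1 by simp
  then show ?thesis using gap_eq by simp
qed

lemma iter2: "(ff k D ^^ (2 * Suc n)) z = ff k D (ff k D ((ff k D ^^ (2 * n)) z))"
proof -
  have "2 * Suc n = Suc (Suc (2 * n))" by simp
  then show ?thesis by (simp only: funpow.simps comp_def)
qed

lemma dyn:
  assumes x: "0 \<le> x" "x \<le> 1" "ff k D x = x" and uq: "\<forall>y\<in>{0..1}. ff k D y = y \<longrightarrow> y = x"
  obtains L where "(\<lambda>n. (ff k D ^^ (2 * n)) 0) \<longlonglongrightarrow> L"
    "\<forall>n. (ff k D ^^ (2 * n)) 0 < x" "\<forall>n. (ff k D ^^ (2 * n)) 0 \<le> (ff k D ^^ (2 * Suc n)) 0"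
    "0 < L" "L \<le> x" "ff k D (ff k D L) = L" "has_uniqueness k D \<longleftrightarrow> L = x"
proof -
  define e where "e n = (ff k D ^^ (2 * n)) 0" for n
  let ?f = "ff k D"
  have eS: "e (Suc n) = ?f (?f (e n))" for n unfolding e_def by (rule iter2)
  have x0: "0 < x"
  proof (rule ccontr)
    assume "\<not> 0 < x" then have "x = 0" using x by simp
    then show False using x ff_0 by simp
  qed
  have x1: "x < 1"
  proof (rule ccontr)
    assume "\<not> x < 1" then have "x = 1" using x by simp
    then show False using x ff_1 by simp
  qed
  have erange: "0 \<le> e n \<and> e n \<le> 1" for n
    unfolding e_def using iter_range[where a=0 and k=k and D=D and n="2 * n"] by simp
  have elt: "e n < x" for n
  proof (induction n)
    case 0 then show ?case using x0 by (simp add: e_def)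
  next
    case (Suc n)
    have "x < ?f (e n)" using ff_strict[of "e n" x] erange Suc x by simp
    moreover have "?f (e n) \<le> 1" using ff_le_half erange[of n] by fastforce
    ultimately have "?f (?f (e n)) < ?f x" using ff_strict[of x "?f (e n)"] x by simp
    then show ?case using eS x by simp
  qed
  have einc: "e n \<le> e (Suc n)" for n
  proof (induction n)
    case 0 then show ?case using erange[of 1] by (simp add: e_def)
  next
    case (Suc n)
    have r1: "0 \<le> ?f (e n) \<and> ?f (e n) \<le> 1" "0 \<le> ?f (e (Suc n)) \<and> ?f (e (Suc n)) \<le> 1"
      using ff_range erange by auto
    have "?f (e (Suc n)) \<le> ?f (e n)" using ff_antimono Suc erange by blast
    then have "?f (?f (e n)) \<le> ?f (?f (e (Suc n)))" using ff_antimono r1 by blast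
    then show ?case using eS by simp
  qed
  have incseq: "incseq e" using einc by (simp add: incseq_SucI)
  obtain L where L: "e \<longlonglongrightarrow> L" "\<forall>i. e i \<le> L"
    using incseq_convergent[OF incseq, of 1] erange by blast
  have Lx: "L \<le> x" using LIMSEQ_le_const2[OF L(1)] elt less_imp_le by blast
  have e1: "0 < e 1"
  proof -
    have "e 1 = ?f (1 / 2)" using eS[of 0] ff_0 by (simp add: e_def)
    then show ?thesis using ff_pos[of "1/2"] by simp
  qed
  have L0: "0 < L" using e1 L(2) by (meson less_le_trans)
  have cL: "isCont ?f L" "isCont ?f (?f L)"
    using ff_isCont L0 Lx x ff_range[of L k D] by auto
  have "(\<lambda>n. ?f (?f (e n))) \<longlonglongrightarrow> ?f (?f L)"
    by (intro isCont_tendsto_compose[OF cL(2)] isCont_tendsto_compose[OF cL(1)] L(1))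
  moreover have "(\<lambda>n. ?f (?f (e n))) \<longlonglongrightarrow> L" unfolding eS[symmetric] by (rule LIMSEQ_Suc[OF L(1)])
  ultimately have hL: "?f (?f L) = L" using LIMSEQ_unique by blast
  have odd: "(\<lambda>n. ?f (e n)) \<longlonglongrightarrow> ?f L" by (rule isCont_tendsto_compose[OF cL(1) L(1)])
  have U: "has_uniqueness k D \<longleftrightarrow> L = x"
  proof -
    have nn: "\<And>n. 0 \<le> boundary_gap k D n" by (simp add: gap_eq)
    have odd_gap: "(\<lambda>n. boundary_gap k D (Suc (2 * n))) = (\<lambda>n. \<bar>?f (e n) - e n\<bar>)"
      by (rule ext) (simp only: gap_Suc e_def funpow.simps comp_def)
    show ?thesis
    proof
      assume "has_uniqueness k D"
      then have g0: "(\<lambda>n. boundary_gap k D n) \<longlonglongrightarrow> 0" using uniq_iff nn by blast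
      have "strict_mono (\<lambda>n::nat. Suc (2 * n))" by (rule strict_monoI) simp
      from LIMSEQ_subseq_LIMSEQ[OF g0 this]
      have "(\<lambda>n. \<bar>?f (e n) - e n\<bar>) \<longlonglongrightarrow> 0" using odd_gap by (simp add: comp_def)
      moreover have "(\<lambda>n. \<bar>?f (e n) - e n\<bar>) \<longlonglongrightarrow> \<bar>?f L - L\<bar>"
        by (intro tendsto_intros odd L(1))
      ultimately have "\<bar>?f L - L\<bar> = 0" using LIMSEQ_unique by blast
      then have "?f L = L" by simp
      moreover have "L \<in> {0..1}" using L0 Lx x(2) by simp
      ultimately show "L = x" using uq by blast
    next
      assume Lx': "L = x"
      define a where "a n = (ff k D ^^ n) 0" for n
      have "(\<lambda>n. a (2 * n)) = e" by (rule ext) (simp add: a_def e_def)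
      then have ae: "(\<lambda>n. a (2 * n)) \<longlonglongrightarrow> x" using L(1) Lx' by simp
      have ao: "(\<lambda>n. a (2 * n + 1)) \<longlonglongrightarrow> x"
      proof -
        have "(\<lambda>n. a (2 * n + 1)) = (\<lambda>n. ?f (e n))"
          by (rule ext) (simp add: a_def e_def)
        then show ?thesis using odd Lx' x by simp
      qed
      have "a \<longlonglongrightarrow> x" by (rule even_odd_LIMSEQ[OF ae ao])
      then have "(\<lambda>n. \<bar>a (Suc n) - a n\<bar>) \<longlonglongrightarrow> \<bar>x - x\<bar>"
        by (intro tendsto_intros LIMSEQ_Suc)
      then have "(\<lambda>n. boundary_gap k D (Suc n)) \<longlonglongrightarrow> 0"
        by (simp add: gap_Suc a_def del: funpow.simps)
      then have "(\<lambda>n. boundary_gap k D n) \<longlonglongrightarrow> 0" by (rule LIMSEQ_imp_Suc)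
      then show "has_uniqueness k D" using uniq_iff nn by blast
    qed
  qed
  show ?thesis
  proof (rule that[of L])
    have "e = (\<lambda>n. (ff k D ^^ (2 * n)) 0)" by (rule ext) (simp add: e_def)
    then show "(\<lambda>n. (ff k D ^^ (2 * n)) 0) \<longlonglongrightarrow> L" using L(1) by simp
    show "\<forall>n. (ff k D ^^ (2 * n)) 0 < x" using elt by (simp add: e_def)
    show "\<forall>n. (ff k D ^^ (2 * n)) 0 \<le> (ff k D ^^ (2 * Suc n)) 0" using einc by (simp add: e_def)
  qed (use L0 Lx hL U in auto)
qed

end


lemma holder2:
  fixes u1 u2 v1 v2 t :: real
  assumes "u1 > 0" "u2 > 0" "v1 > 0" "v2 > 0" "0 \<le> t" "t \<le> 1"
  shows "u1 powr t * v1 powr (1 - t) + u2 powr t * v2 powr (1 - t) \<le> (u1 + u2) powr t * (v1 + v2) powr (1 - t)"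
proof -
  define U V where "U = u1 + u2" and "V = v1 + v2"
  have UV: "U > 0" "V > 0" using assms by (auto simp: U_def V_def)
  have Y1: "(u1 / U) powr t * (v1 / V) powr (1 - t) \<le> t * (u1 / U) + (1 - t) * (v1 / V)"
    by (rule Youngs_inequality_0) (use assms UV in auto)
  have Y2: "(u2 / U) powr t * (v2 / V) powr (1 - t) \<le> t * (u2 / U) + (1 - t) * (v2 / V)"
    by (rule Youngs_inequality_0) (use assms UV in auto)
  have "t * (u1 / U) + (1 - t) * (v1 / V) + (t * (u2 / U) + (1 - t) * (v2 / V)) = 1"
  proof -
    have a: "u1 / U + u2 / U = 1" using UV by (simp add: U_def add_divide_distrib[symmetric])
    have b: "v1 / V + v2 / V = 1" using UV by (simp add: V_def add_divide_distrib[symmetric])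
    have "t * (u1 / U) + (1 - t) * (v1 / V) + (t * (u2 / U) + (1 - t) * (v2 / V)) =
      t * (u1 / U + u2 / U) + (1 - t) * (v1 / V + v2 / V)" by (simp add: algebra_simps)
    then show ?thesis using a b by simp
  qed
  then have S: "(u1 / U) powr t * (v1 / V) powr (1 - t) + (u2 / U) powr t * (v2 / V) powr (1 - t) \<le> 1"
    using Y1 Y2 by linarith
  have e1: "(u1 / U) powr t * (v1 / V) powr (1 - t) = (u1 powr t * v1 powr (1 - t)) / (U powr t * V powr (1 - t))"
    using assms UV by (simp add: powr_divide)
  have e2: "(u2 / U) powr t * (v2 / V) powr (1 - t) = (u2 powr t * v2 powr (1 - t)) / (U powr t * V powr (1 - t))"
    using assms UV by (simp add: powr_divide)
  have pos: "U powr t * V powr (1 - t) > 0" using UV by simp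
  from S pos show ?thesis unfolding e1 e2 U_def[symmetric] V_def[symmetric]
    by (simp add: divide_le_eq add_divide_distrib[symmetric])
qed

definition logconv :: "(real \<Rightarrow> real) \<Rightarrow> bool" where
  "logconv f \<longleftrightarrow> (\<forall>s. f s > 0) \<and> (\<forall>s t l. 0 \<le> l \<longrightarrow> l \<le> 1 \<longrightarrow> f (l * s + (1 - l) * t) \<le> f s powr l * f t powr (1 - l))"

lemma logconv_add:
  assumes "logconv f" "logconv g"
  shows "logconv (\<lambda>s. f s + g s)"
  unfolding logconv_def
proof (intro conjI allI impI)
  fix s show "f s + g s > 0" using assms by (simp add: logconv_def add_pos_pos)
next
  fix s t l :: real assume l: "0 \<le> l" "l \<le> 1"
  have "f (l * s + (1 - l) * t) + g (l * s + (1 - l) * t) \<le> f s powr l * f t powr (1 - l) + g s powr l * g t powr (1 - l)"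
    using assms l unfolding logconv_def by (meson add_mono)
  also have "\<dots> \<le> (f s + g s) powr l * (f t + g t) powr (1 - l)"
    by (rule holder2) (use assms l in \<open>auto simp: logconv_def\<close>)
  finally show "f (l * s + (1 - l) * t) + g (l * s + (1 - l) * t) \<le> (f s + g s) powr l * (f t + g t) powr (1 - l)" .
qed

lemma logconv_mult:
  assumes "logconv f" "logconv g"
  shows "logconv (\<lambda>s. f s * g s)"
  unfolding logconv_def
proof (intro conjI allI impI)
  fix s show "f s * g s > 0" using assms by (simp add: logconv_def)
next
  fix s t l :: real assume l: "0 \<le> l" "l \<le> 1"
  have fp: "\<And>s. f s > 0" and gp: "\<And>s. g s > 0" using assms by (auto simp: logconv_def)
  have "f (l * s + (1 - l) * t) * g (l * s + (1 - l) * t) \<le> (f s powr l * f t powr (1 - l)) * (g s powr l * g t powr (1 - l))"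
    using assms l unfolding logconv_def by (intro mult_mono) (auto intro: less_imp_le)
  also have "\<dots> = (f s * g s) powr l * (f t * g t) powr (1 - l)"
    using fp gp by (simp add: powr_mult)
  finally show "f (l * s + (1 - l) * t) * g (l * s + (1 - l) * t) \<le> (f s * g s) powr l * (f t * g t) powr (1 - l)" .
qed

lemma logconv_const: "c > 0 \<Longrightarrow> logconv (\<lambda>s. c)"
  unfolding logconv_def by (simp add: powr_add[symmetric])

lemma logconv_expm: "logconv (\<lambda>s. exp (- s))"
  unfolding logconv_def
proof (intro conjI allI impI)
  fix s t l :: real assume l: "0 \<le> l" "l \<le> 1"
  have "exp (- s) powr l * exp (- t) powr (1 - l) = exp (- (l * s + (1 - l) * t))"
    by (simp add: powr_def exp_add[symmetric] algebra_simps)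
  then show "exp (- (l * s + (1 - l) * t)) \<le> exp (- s) powr l * exp (- t) powr (1 - l)" by simp
qed simp

lemma logconv_power: "logconv f \<Longrightarrow> logconv (\<lambda>s. f s ^ n)"
proof (induction n)
  case 0 then show ?case by (simp add: logconv_const)
next
  case (Suc n)
  then show ?case using logconv_mult[OF Suc.prems Suc.IH] by (simp add: mult.commute)
qed

lemma logconv_sum: "logconv (f 1) \<Longrightarrow> (\<And>j. logconv (f j)) \<Longrightarrow> logconv (\<lambda>s. \<Sum>j=1..Suc n. f j s)"
proof (induction n)
  case 0 then show ?case by simp
next
  case (Suc n)
  have "logconv (\<lambda>s. (\<Sum>j=1..Suc n. f j s) + f (Suc (Suc n)) s)"
    by (rule logconv_add) (use Suc in auto)
  then show ?case by (simp add: sum.cl_ivl_Suc)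
qed

definition BB :: "real \<Rightarrow> real" where "BB s = 1 + exp (- s)"
definition PP :: "nat \<Rightarrow> real \<Rightarrow> real" where "PP m s = (\<Sum>j=1..m. BB s ^ j)"
definition rr :: "nat \<Rightarrow> nat \<Rightarrow> real \<Rightarrow> real" where "rr m d s = real d * real m / PP m s"
definition FF :: "nat \<Rightarrow> nat \<Rightarrow> real \<Rightarrow> real" where
  "FF m d s = real d * (ln (BB s ^ m - 1) - real m * ln (BB s))"
definition lg :: "real \<Rightarrow> real" where "lg z = ln (z / (1 - z))"

lemma BB_gt1: "BB s > 1" by (simp add: BB_def)

lemma BBm_gt1: "m \<ge> 1 \<Longrightarrow> BB s ^ m > 1"
  using BB_gt1 by (simp add: one_less_power)

lemma PP_id: "PP m s * (BB s - 1) = BB s * (BB s ^ m - 1)"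
proof (induction m)
  case 0 then show ?case by (simp add: PP_def)
next
  case (Suc m)
  have "PP (Suc m) s = PP m s + BB s ^ Suc m" by (simp add: PP_def sum.cl_ivl_Suc)
  then show ?case using Suc by (simp add: algebra_simps)
qed

lemma PP_pos: "m \<ge> 1 \<Longrightarrow> PP m s > 0"
proof -
  assume m: "m \<ge> 1"
  have "BB s ^ m - 1 > 0" "BB s > 0" using BB_gt1[of s] BBm_gt1[OF m, of s] by auto
  then have "BB s * (BB s ^ m - 1) > 0" by simp
  then have "PP m s * (BB s - 1) > 0" using PP_id by simp
  moreover have "BB s - 1 > 0" using BB_gt1[of s] by simp
  ultimately show ?thesis by (metis zero_less_mult_pos2 mult.commute)
qed

lemma PP_eq: "PP m s = BB s * (BB s ^ m - 1) / (BB s - 1)"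
  using PP_id[of m s] BB_gt1[of s] by (simp add: field_simps)

lemma logconv_BB: "logconv BB"
  unfolding BB_def[abs_def] by (rule logconv_add[OF logconv_const logconv_expm]) simp

lemma logconv_PP: "m \<ge> 1 \<Longrightarrow> logconv (PP m)"
proof -
  assume "m \<ge> 1"
  then obtain n where n: "m = Suc n" by (cases m) auto
  have "logconv (\<lambda>s. \<Sum>j=1..Suc n. BB s ^ j)"
    by (rule logconv_sum) (auto intro: logconv_power logconv_BB)
  then show ?thesis unfolding n PP_def[abs_def] .
qed

lemma PP_antimono: "s \<le> t \<Longrightarrow> PP m t \<le> PP m s"
  unfolding PP_def
proof (rule sum_mono)
  fix j assume "s \<le> t"
  then have "BB t \<le> BB s" by (simp add: BB_def)
  then show "BB t ^ j \<le> BB s ^ j" using BB_gt1[of t] by (intro power_mono) auto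
qed

lemma rr_pos: "m \<ge> 1 \<Longrightarrow> d \<ge> 1 \<Longrightarrow> rr m d s > 0"
  using PP_pos by (simp add: rr_def)

lemma rr_mono: "m \<ge> 1 \<Longrightarrow> s \<le> t \<Longrightarrow> rr m d s \<le> rr m d t"
  unfolding rr_def using PP_antimono[of s t m] PP_pos[of m]
  by (intro divide_left_mono) (auto intro: mult_pos_pos)

lemma rr_logconc:
  assumes m: "m \<ge> 1" and d: "d \<ge> 1" and l: "0 \<le> l" "l \<le> 1"
  shows "rr m d s powr l * rr m d t powr (1 - l) \<le> rr m d (l * s + (1 - l) * t)"
proof -
  define c where "c = real d * real m"
  have c: "c > 0" using m d by (simp add: c_def)
  have Ps: "PP m s > 0" "PP m t > 0" "PP m (l * s + (1 - l) * t) > 0" using PP_pos[OF m] by auto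
  have LC: "PP m (l * s + (1 - l) * t) \<le> PP m s powr l * PP m t powr (1 - l)"
    using logconv_PP[OF m] l unfolding logconv_def by blast
  have "rr m d s powr l * rr m d t powr (1 - l) = c powr l * c powr (1 - l) / (PP m s powr l * PP m t powr (1 - l))"
    unfolding rr_def c_def[symmetric] using c Ps by (simp add: powr_divide)
  also have "\<dots> = c / (PP m s powr l * PP m t powr (1 - l))"
    using c by (simp add: powr_add[symmetric])
  also have "\<dots> \<le> c / PP m (l * s + (1 - l) * t)"
    using LC Ps c by (intro divide_left_mono) auto
  also have "\<dots> = rr m d (l * s + (1 - l) * t)" by (simp add: rr_def c_def)
  finally show ?thesis .
qed

lemma BB_deriv: "(BB has_real_derivative - exp (- s)) (at s)"
  unfolding BB_def[abs_def] by (auto intro!: derivative_eq_intros)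

lemma FF_deriv0:
  assumes m: "m \<ge> 1"
  shows "(FF m d has_real_derivative
      real d * ((1 / (BB s ^ m - 1)) * (real m * (- exp (- s) * BB s ^ (m - Suc 0)) - 0) - real m * ((1 / BB s) * (- exp (- s))))) (at s)"
proof -
  have B1: "BB s ^ m - 1 > 0" using BBm_gt1[OF m] by simp
  have B0: "BB s > 0" using BB_gt1[of s] by simp
  have a: "((\<lambda>s. BB s ^ m - 1) has_real_derivative real m * (- exp (- s) * BB s ^ (m - Suc 0)) - 0) (at s)"
    by (intro DERIV_diff DERIV_power BB_deriv DERIV_const)
  have b: "((\<lambda>s. ln (BB s ^ m - 1)) has_real_derivative (1 / (BB s ^ m - 1)) * (real m * (- exp (- s) * BB s ^ (m - Suc 0)) - 0)) (at s)"
    by (rule DERIV_chain2[OF DERIV_ln_divide[OF B1] a])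
  have c: "((\<lambda>s. ln (BB s)) has_real_derivative (1 / BB s) * (- exp (- s))) (at s)"
    by (rule DERIV_chain2[OF DERIV_ln_divide[OF B0] BB_deriv])
  show ?thesis
    unfolding FF_def[abs_def] by (intro DERIV_cmult DERIV_diff b c)
qed

lemma FF_deriv:
  assumes m: "m \<ge> 1"
  shows "(FF m d has_real_derivative - rr m d s) (at s)"
proof -
  have B1: "BB s ^ m - 1 > 0" using BBm_gt1[OF m] by simp
  have B0: "BB s > 0" using BB_gt1[of s] by simp
  have eq: "real d * ((1 / (BB s ^ m - 1)) * (real m * (- exp (- s) * BB s ^ (m - Suc 0)) - 0) - real m * ((1 / BB s) * (- exp (- s))))
      = - rr m d s"
  proof -
    have e: "exp (- s) = BB s - 1" by (simp add: BB_def)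
    have pw: "BB s ^ m = BB s * BB s ^ (m - Suc 0)" using m by (cases m) simp_all
    define B where "B = BB s"
    define Q where "Q = B ^ (m - Suc 0)"
    have BQ: "BB s ^ m = B * Q" unfolding B_def Q_def using pw .
    have BQ': "B ^ m = B * Q" unfolding B_def Q_def using pw .
    have "real d * ((1 / (B * Q - 1)) * (real m * (- (B - 1) * Q) - 0) - real m * ((1 / B) * (- (B - 1))))
       = - (real d * real m / (B * (B * Q - 1) / (B - 1)))"
    proof -
      have B: "B > 1" using BB_gt1[of s] by (simp add: B_def)
      have BQ0: "B * Q - 1 > 0" using B1 BQ by simp
      have h: "1 / B - Q / (B * Q - 1) = - 1 / (B * (B * Q - 1))"
        using B BQ0 by (simp add: field_simps)
      have "real d * ((1 / (B * Q - 1)) * (real m * (- (B - 1) * Q) - 0) - real m * ((1 / B) * (- (B - 1))))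
         = real d * real m * (B - 1) * (1 / B - Q / (B * Q - 1))" using B BQ0 by (simp add: field_simps)
      also have "\<dots> = - (real d * real m * (B - 1) / (B * (B * Q - 1)))" unfolding h by simp
      also have "\<dots> = - (real d * real m / (B * (B * Q - 1) / (B - 1)))" by simp
      finally show ?thesis .
    qed
    then show ?thesis unfolding rr_def PP_eq e B_def[symmetric] Q_def[symmetric] BQ' .
  qed
  show ?thesis using FF_deriv0[OF m, of d s] unfolding eq .
qed

lemma FF_concave:
  assumes m: "m \<ge> 1" and l: "0 \<le> l" "l \<le> 1"
  shows "l * FF m d a + (1 - l) * FF m d b \<le> FF m d (l * a + (1 - l) * b)"
proof -
  have cv: "convex_on UNIV (\<lambda>s. - FF m d s)"
  proof (rule convex_on_realI[where f' = "rr m d"])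
    fix s :: real
    show "((\<lambda>s. - FF m d s) has_real_derivative rr m d s) (at s)"
      using DERIV_minus[OF FF_deriv[OF m, of d s]] by simp
  next
    fix s t :: real assume "s \<le> t" then show "rr m d s \<le> rr m d t" by (rule rr_mono[OF m])
  qed simp
  have "- FF m d ((1 - (1 - l)) *\<^sub>R a + (1 - l) *\<^sub>R b) \<le> (1 - (1 - l)) * (- FF m d a) + (1 - l) * (- FF m d b)"
    by (rule convex_onD[OF cv]) (use l in auto)
  then show ?thesis by simp
qed

lemma BB_lg: "0 < z \<Longrightarrow> z < 1 \<Longrightarrow> BB (lg z) = 1 / z"
proof -
  assume z: "0 < z" "z < 1"
  have "exp (- lg z) = (1 - z) / z"
    using z by (simp add: lg_def exp_minus)
  then show ?thesis using z by (simp add: BB_def field_simps)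
qed

lemma lg_strict: "0 < a \<Longrightarrow> a < b \<Longrightarrow> b < 1 \<Longrightarrow> lg a < lg b"
proof -
  assume ab: "0 < a" "a < b" "b < 1"
  have "a / (1 - a) < b / (1 - b)" using ab by (simp add: field_simps)
  then show ?thesis using ab by (simp add: lg_def)
qed

lemma FF_lg:
  assumes z: "0 < z" "z < 1"
  shows "FF m d (lg z) = real d * ln (1 - z ^ m)"
proof -
  show ?thesis
  proof (cases "m = 0")
    case True then show ?thesis by (simp add: FF_def)
  next
    case False
    then have zm: "z ^ m < 1" "0 < z ^ m" using z by (simp_all add: power_less_one_iff)
    have "BB (lg z) ^ m - 1 = (1 / z) ^ m - 1" using BB_lg[OF z] by simp
    also have "\<dots> = (1 - z ^ m) / z ^ m" using zm z by (simp add: power_one_over diff_divide_distrib)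
    finally have "BB (lg z) ^ m - 1 = (1 - z ^ m) / z ^ m" .
    then have "ln (BB (lg z) ^ m - 1) = ln (1 - z ^ m) - ln (z ^ m)" using zm z by (simp add: ln_div)
    moreover have "ln (BB (lg z)) = - ln z" using BB_lg[OF z] z by (simp add: ln_div)
    moreover have "ln (z ^ m) = real m * ln z" using z by (simp add: ln_realpow)
    ultimately show ?thesis by (simp add: FF_def algebra_simps)
  qed
qed

lemma lg_ff:
  assumes k: "k \<ge> 2" and z: "0 < z" "z < 1"
  shows "lg (ff k D z) = real (D - 1) * ln (1 - z ^ (k - 1))"
proof -
  have zm: "z ^ (k - 1) < 1" using z k by (simp add: power_less_one_iff)
  define G where "G = (1 - z ^ (k - 1)) ^ (D - 1)"
  have G: "G > 0" using zm by (simp add: G_def)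
  have "ff k D z / (1 - ff k D z) = G" unfolding ff_def G_def[symmetric] using G by (simp add: field_simps)
  then show ?thesis unfolding lg_def using zm by (simp add: G_def ln_realpow)
qed

lemma PP_lg: "0 < z \<Longrightarrow> z < 1 \<Longrightarrow> PP m (lg z) = (1 - z ^ m) / (z ^ m * (1 - z))"
proof -
  assume z: "0 < z" "z < 1"
  have "PP m (lg z) = (1 / z) * ((1 / z) ^ m - 1) / (1 / z - 1)" unfolding PP_eq BB_lg[OF z] ..
  also have "\<dots> = (1 - z ^ m) / (z ^ m * (1 - z))" using z by (simp add: power_one_over field_simps)
  finally show ?thesis .
qed

lemma crit_point:
  assumes m: "m \<ge> 1" and ab: "a < b" and eq: "FF m d (FF m d a) - a = FF m d (FF m d b) - b"
  shows "\<exists>c. a < c \<and> c < b \<and> rr m d (FF m d c) * rr m d c = 1"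
proof -
  let ?P = "\<lambda>s. FF m d (FF m d s) - s"
  have dP: "(?P has_real_derivative (- rr m d (FF m d s)) * (- rr m d s) - 1) (at s)" for s
    by (intro DERIV_diff DERIV_chain2[OF FF_deriv[OF m] FF_deriv[OF m]] DERIV_ident)
  have cont: "continuous_on {a..b} ?P"
    using dP by (meson DERIV_isCont continuous_at_imp_continuous_on)
  have dif: "?P differentiable (at s)" for s
    using dP real_differentiable_def by blast
  obtain c where c: "a < c" "c < b" "(?P has_real_derivative 0) (at c)"
    using Rolle[OF ab eq cont dif] by blast
  have "(- rr m d (FF m d c)) * (- rr m d c) - 1 = 0" using DERIV_unique[OF dP c(3)] .
  then show ?thesis using c by auto
qed

lemma no_cycle:
  assumes m: "m \<ge> 1" and d: "d \<ge> 1"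
    and ord: "sa < sx" "sx < sb"
    and cyc: "FF m d sa = sb" "FF m d sb = sa" and fx: "FF m d sx = sx"
  shows "1 \<le> rr m d sx"
proof -
  let ?F = "FF m d" and ?r = "rr m d"
  obtain c1 where c1: "sa < c1" "c1 < sx" "?r (?F c1) * ?r c1 = 1"
    using crit_point[OF m ord(1), of d] cyc fx by auto
  obtain c2 where c2: "sx < c2" "c2 < sb" "?r (?F c2) * ?r c2 = 1"
    using crit_point[OF m ord(2), of d] cyc fx by auto
  define l where "l = (c2 - sx) / (c2 - c1)"
  have l: "0 \<le> l" "l \<le> 1" using c1 c2 by (auto simp: l_def field_simps)
  have mid: "l * c1 + (1 - l) * c2 = sx"
  proof -
    have ne: "c2 - c1 \<noteq> 0" using c1 c2 by simp
    have h1: "l * (c2 - c1) = c2 - sx" using ne unfolding l_def by simp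
    have "l * c1 + (1 - l) * c2 = c2 - l * (c2 - c1)" by (simp add: algebra_simps)
    then show ?thesis using h1 by linarith
  qed
  have rp: "\<And>s. ?r s > 0" using rr_pos[OF m d] .
  have A: "?r c1 powr l * ?r c2 powr (1 - l) \<le> ?r sx"
    using rr_logconc[OF m d l, of c1 c2] mid by simp
  have "l * ?F c1 + (1 - l) * ?F c2 \<le> ?F sx"
    using FF_concave[OF m l, of d c1 c2] mid by simp
  then have "?r (l * ?F c1 + (1 - l) * ?F c2) \<le> ?r (?F sx)" by (rule rr_mono[OF m])
  then have B: "?r (?F c1) powr l * ?r (?F c2) powr (1 - l) \<le> ?r (?F sx)"
    using rr_logconc[OF m d l, of "?F c1" "?F c2"] by simp
  have "(?r c1 powr l * ?r c2 powr (1 - l)) * (?r (?F c1) powr l * ?r (?F c2) powr (1 - l)) \<le> ?r sx * ?r (?F sx)"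
    using A B rp by (intro mult_mono) (auto intro: less_imp_le)
  moreover have "(?r c1 powr l * ?r c2 powr (1 - l)) * (?r (?F c1) powr l * ?r (?F c2) powr (1 - l))
      = (?r (?F c1) * ?r c1) powr l * (?r (?F c2) * ?r c2) powr (1 - l)"
    using rp by (simp add: powr_mult algebra_simps)
  ultimately have "1 \<le> ?r sx * ?r sx" using c1 c2 fx by simp
  show ?thesis
  proof (rule ccontr)
    assume "\<not> 1 \<le> ?r sx"
    then have "?r sx < 1" by simp
    then have "?r sx * ?r sx < ?r sx * 1" using rp[of sx] by (intro mult_strict_left_mono) auto
    then show False using \<open>1 \<le> ?r sx * ?r sx\<close> \<open>?r sx < 1\<close> by simp
  qed
qed


lemma alg:
  fixes x y u W G dd mm :: real
  assumes x: "0 < x" "x < 1" and y: "0 < y" and u: "0 < u" "u = 1 - x * y"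
    and G: "G = u * W" and fx: "x * (1 + G) = G" and dm: "0 \<le> dd" "0 \<le> mm"
  shows "\<bar>(dd * ((0 - mm * y) * W) * (1 + G) - G * (0 + dd * ((0 - mm * y) * W))) / ((1 + G) * (1 + G))\<bar>
     = dd * mm / (u / (x * y * (1 - x)))"
proof -
  have G1: "G = x / (1 - x)" using fx x by (simp add: field_simps)
  have G2: "1 + G = 1 / (1 - x)" using G1 x by (simp add: field_simps)
  have h: "u * W * (1 - x) = x" using G G1 x by (simp add: field_simps)
  have W: "W = x / ((1 - x) * u)" using u x h by (simp add: field_simps)
  have "(dd * ((0 - mm * y) * W) * (1 + G) - G * (0 + dd * ((0 - mm * y) * W))) / ((1 + G) * (1 + G))
      = dd * ((0 - mm * y) * W) / ((1 + G) * (1 + G))" by (simp add: algebra_simps)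
  also have "\<dots> = dd * ((0 - mm * y) * W) * (1 - x) * (1 - x)" unfolding G2 using x by (simp add: field_simps)
  also have "\<dots> = - (dd * mm * (x * y * (1 - x) / u))" unfolding W using x u by (simp add: field_simps)
  finally show ?thesis using x y u dm by (simp add: abs_mult)
qed

context
  fixes k D :: nat
  assumes k2: "k \<ge> 2" and D2: "D \<ge> 2"
begin

lemma deriv_rel:
  assumes x: "0 < x" "x < 1" and fx: "ff k D x = x"
  shows "\<exists>Dv. (ff k D has_real_derivative Dv) (at x) \<and> \<bar>Dv\<bar> = rr (k - 1) (D - 1) (lg x)"
proof -
  define m d where "m = k - 1" and "d = D - 1"
  have m: "m \<ge> 1" and d: "d \<ge> 1" using k2 D2 by (auto simp: m_def d_def)
  define y u where "y = x ^ (m - Suc 0)" and "u = 1 - x ^ m"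
  define W G where "W = u ^ (d - Suc 0)" and "G = u ^ d"
  have xm: "x ^ m = x * y" unfolding y_def using m by (cases m) auto
  have ypos: "0 < y" using x by (simp add: y_def)
  have xm1: "x ^ m < 1" using x m by (simp add: power_less_one_iff)
  have upos: "0 < u" using xm1 by (simp add: u_def)
  have uu: "u = 1 - x * y" using xm by (simp add: u_def)
  have GW: "G = u * W" unfolding G_def W_def using d by (cases d) auto
  have Gpos: "G > 0" using upos by (simp add: G_def)
  have fxG: "x * (1 + G) = G"
  proof -
    have "G / (1 + G) = x" using fx unfolding ff_def m_def[symmetric] d_def[symmetric] u_def[symmetric] G_def[symmetric] .
    then show ?thesis using Gpos by (simp add: field_simps)
  qed
  have g: "((\<lambda>z. (1 - z ^ m) ^ d) has_real_derivative real d * ((0 - real m * x ^ (m - Suc 0)) * (1 - x ^ m) ^ (d - Suc 0))) (at x)"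
    by (intro DERIV_power DERIV_diff DERIV_const DERIV_pow)
  have h: "((\<lambda>z. 1 + (1 - z ^ m) ^ d) has_real_derivative 0 + real d * ((0 - real m * x ^ (m - Suc 0)) * (1 - x ^ m) ^ (d - Suc 0))) (at x)"
    by (intro DERIV_add DERIV_const g)
  have nz: "1 + (1 - x ^ m) ^ d \<noteq> 0" using Gpos by (simp add: G_def u_def)
  have dv: "(ff k D has_real_derivative
      (real d * ((0 - real m * y) * W) * (1 + G) - G * (0 + real d * ((0 - real m * y) * W))) / ((1 + G) * (1 + G))) (at x)"
    using DERIV_divide[OF g h nz] unfolding ff_def[abs_def] m_def[symmetric] d_def[symmetric]
    unfolding y_def[symmetric] u_def[symmetric] W_def[symmetric] G_def[symmetric] .
  have "\<bar>(real d * ((0 - real m * y) * W) * (1 + G) - G * (0 + real d * ((0 - real m * y) * W))) / ((1 + G) * (1 + G))\<bar>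
     = real d * real m / (u / (x * y * (1 - x)))"
    by (rule alg[OF x ypos upos uu GW fxG]) simp_all
  also have "\<dots> = rr m d (lg x)"
    unfolding rr_def PP_lg[OF x] u_def xm by simp
  finally show ?thesis using dv unfolding m_def d_def by blast
qed

lemma partA:
  assumes x: "0 \<le> x" "x \<le> 1" "ff k D x = x" and uq: "\<forall>y\<in>{0..1}. ff k D y = y \<longrightarrow> y = x"
    and dv: "(ff k D has_real_derivative Dv) (at x)" and big: "\<bar>Dv\<bar> > 1"
  shows "\<not> has_uniqueness k D"
proof
  assume U: "has_uniqueness k D"
  obtain L where L: "(\<lambda>n. (ff k D ^^ (2 * n)) 0) \<longlonglongrightarrow> L"
    "\<forall>n. (ff k D ^^ (2 * n)) 0 < x" "\<forall>n. (ff k D ^^ (2 * n)) 0 \<le> (ff k D ^^ (2 * Suc n)) 0"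
    "0 < L" "L \<le> x" "ff k D (ff k D L) = L" "has_uniqueness k D \<longleftrightarrow> L = x"
    using dyn[OF k2 D2 x uq] by blast
  have Lx: "L = x" using L(7) U by simp
  have dh: "((\<lambda>y. ff k D (ff k D y) - y) has_real_derivative Dv * Dv - 1) (at x)"
    using DERIV_diff[OF DERIV_chain2[OF _ dv] DERIV_ident] dv x(3) by (metis (no_types))
  have pos: "0 < Dv * Dv - 1"
  proof -
    have "1 < \<bar>Dv\<bar> * \<bar>Dv\<bar>" using big by (metis abs_ge_zero less_1_mult)
    then show ?thesis by (simp add: abs_mult[symmetric])
  qed
  obtain \<delta> where \<delta>: "\<delta> > 0" "\<And>t. t > 0 \<Longrightarrow> t < \<delta> \<Longrightarrow> ff k D (ff k D (x - t)) - (x - t) < ff k D (ff k D x) - x"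
    using DERIV_pos_inc_left[OF dh pos] by blast
  obtain n where n: "\<bar>(ff k D ^^ (2 * n)) 0 - x\<bar> < \<delta>"
    using LIMSEQ_D[OF L(1) \<delta>(1)] Lx by (auto simp: dist_real_def)
  define t where "t = x - (ff k D ^^ (2 * n)) 0"
  have t: "t > 0" "t < \<delta>" using n L(2) by (auto simp: t_def)
  have "ff k D (ff k D (x - t)) - (x - t) < 0" using \<delta>(2)[OF t] x(3) by simp
  moreover have "(ff k D ^^ (2 * Suc n)) 0 = ff k D (ff k D ((ff k D ^^ (2 * n)) 0))" by (rule iter2[OF k2 D2])
  ultimately have "(ff k D ^^ (2 * Suc n)) 0 < (ff k D ^^ (2 * n)) 0" by (simp add: t_def)
  then show False using L(3) by (meson not_le)
qed

lemma partB:
  assumes x: "0 \<le> x" "x \<le> 1" "ff k D x = x" and uq: "\<forall>y\<in>{0..1}. ff k D y = y \<longrightarrow> y = x"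
    and small: "rr (k - 1) (D - 1) (lg x) < 1"
  shows "has_uniqueness k D"
proof -
  obtain L where L: "(\<lambda>n. (ff k D ^^ (2 * n)) 0) \<longlonglongrightarrow> L"
    "\<forall>n. (ff k D ^^ (2 * n)) 0 < x" "\<forall>n. (ff k D ^^ (2 * n)) 0 \<le> (ff k D ^^ (2 * Suc n)) 0"
    "0 < L" "L \<le> x" "ff k D (ff k D L) = L" "has_uniqueness k D \<longleftrightarrow> L = x"
    using dyn[OF k2 D2 x uq] by blast
  show ?thesis
  proof (rule ccontr)
    assume "\<not> has_uniqueness k D"
    then have Lx: "L < x" using L(5,7) by simp
    define b where "b = ff k D L"
    have x0: "0 < x" using L(4) Lx by simp
    have x1: "x < 1"
    proof (rule ccontr)
      assume "\<not> x < 1" then have "x = 1" using x by simp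
      then show False using x ff_1[OF k2 D2] by simp
    qed
    have bx: "x < b" using ff_strict[OF k2 D2, of L x] L(4) Lx x unfolding b_def by simp
    have b1: "b < 1" using ff_le_half[OF k2 D2, of L] L(4) Lx x unfolding b_def by simp
    have fb: "ff k D b = L" using L(6) unfolding b_def .
    let ?m = "k - 1" and ?d = "D - 1"
    have m: "?m \<ge> 1" and d: "?d \<ge> 1" using k2 D2 by auto
    have conj: "lg (ff k D z) = FF ?m ?d (lg z)" if "0 < z" "z < 1" for z
      using lg_ff[OF k2 that] FF_lg[OF that] by simp
    have "1 \<le> rr ?m ?d (lg x)"
    proof (rule no_cycle[OF m d])
      show "lg L < lg x" using lg_strict L(4) Lx x1 by simp
      show "lg x < lg b" using lg_strict x0 bx b1 by simp
      show "FF ?m ?d (lg L) = lg b" using conj[of L] L(4) Lx x1 unfolding b_def by simp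
      show "FF ?m ?d (lg b) = lg L" using conj[of b] x0 bx b1 fb by simp
      show "FF ?m ?d (lg x) = lg x" using conj[of x] x0 x1 x(3) by simp
    qed
    then show False using small by simp
  qed
qed

end

theorem lemma57:
  fixes k D :: nat and f :: "real \<Rightarrow> real" and x :: real
  assumes "k \<ge> 2" and "D \<ge> 2"
    and "f = (\<lambda>z. (1 - z ^ (k - 1)) ^ (D - 1) / (1 + (1 - z ^ (k - 1)) ^ (D - 1)))"
    and "x \<in> {0..1}" and "f x = x"
    and "\<forall>y\<in>{0..1}. f y = y \<longrightarrow> y = x"
  shows "(\<bar>deriv f x\<bar> < 1 \<longrightarrow> has_uniqueness k D)
       \<and> (\<bar>deriv f x\<bar> > 1 \<longrightarrow> \<not> has_uniqueness k D)"
proof -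
  note k2 = assms(1) and D2 = assms(2)
  have fe: "f = ff k D" using assms(3) by (simp add: ff_def[abs_def])
  have x: "0 \<le> x" "x \<le> 1" "ff k D x = x" using assms(4,5) fe by auto
  have uq: "\<forall>y\<in>{0..1}. ff k D y = y \<longrightarrow> y = x" using assms(6) fe by simp
  have x0: "0 < x"
  proof (rule ccontr)
    assume "\<not> 0 < x" then have "x = 0" using x by simp
    then show False using x ff_0[OF k2 D2] by simp
  qed
  have x1: "x < 1"
  proof (rule ccontr)
    assume "\<not> x < 1" then have "x = 1" using x by simp
    then show False using x ff_1[OF k2 D2] by simp
  qed
  obtain Dv where dv: "(ff k D has_real_derivative Dv) (at x)" and rel: "\<bar>Dv\<bar> = rr (k - 1) (D - 1) (lg x)"
    using deriv_rel[OF k2 D2 x0 x1 x(3)] by blast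
  have dd: "deriv f x = Dv" unfolding fe by (rule DERIV_imp_deriv[OF dv])
  show ?thesis
  proof (intro conjI impI)
    assume "\<bar>deriv f x\<bar> < 1"
    then show "has_uniqueness k D" using partB[OF k2 D2 x uq] rel dd by simp
  next
    assume "\<bar>deriv f x\<bar> > 1"
    then show "\<not> has_uniqueness k D" using partA[OF k2 D2 x uq dv] dd by simp
  qed
qed


end
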